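(* Let $a=(a_i)_{i\in\mathbb Z}$ be any sequence of complex numbers and $\mu$ a Young diagram. Then $$s_{\mu;a}(x(\mu);y(\mu))=\prod_{(i,j)\in\mu}(a_{\mu_i-i+1}-a_{j-\mu'_j})=\prod_{(i,j)\in\mu}(a_{\mu_i-i+1}+\widehat a_{\mu'_j-j+1}),$$ the products being over the boxes $(i,j)$ (row $i$, column $j$) of $\mu$. If the numbers $a_i$, $i\in\mathbb Z$, are pairwise distinct, then $s_{\mu;a}(x(\mu);y(\mu))\ne0$ for all $\mu$.
   Context: $\Lambda$ is the algebra of symmetric functions over $\mathbb C$ with complete homogeneous $h_k$, elementary $e_k$, power sums $\mathbf p_k$. For a sequence $a$ define $h_{k;a}=\sum_{i=1}^k(-1)^{k-i}e_{k-i}(a_1,\dots,a_{k-1})h_i$ ($k\ge1$), $h_{0;a}=1$, $h_{k;a}=0$ ($k<0$); $(\tau^ra)_i=a_{i+r}$; $s_{\mu;a}=\det[h_{\mu_i-i+j;\,\tau^{1-j}a}]_{i,j=1}^N$ for any $N\ge\ell(\mu)$. Dual sequence: $\widehat a_i=-a_{1-i}$. $\mu'$ is the transposed diagram. Each $f\in\Lambda$ is evaluated at $(x;y)\in\mathbb C^d\times\mathbb C^d$ via $\mathbf p_k\mapsto\sum_ix_i^k+(-1)^{k-1}\sum_jy_j^k$. For a nonempty diagram $\lambda=(p_1,\dots,p_d\mid q_1,\dots,q_d)$ in Frobenius notation ($p_i=\lambda_i-i$, $q_i=\lambda'_i-i$, $d$ the number of diagonal boxes), $(x(\lambda);y(\lambda))=(a_{p_1+1},\dots,a_{p_d+1};\widehat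 a_{q_1+1},\dots,\widehat a_{q_d+1})$; and $(x(\varnothing);y(\varnothing))=(0;0)$. *)

theory Defs
  imports Complex_Main "Jordan_Normal_Form.Determinant"
begin

definition young :: "nat list \<Rightarrow> bool" where
  "young \<mu> \<longleftrightarrow> sorted (rev \<mu>) \<and> 0 \<notin> set \<mu>"

text \<open>Row lengths, 1-indexed: part mu i = mu_i (0 beyond the length).\<close>
definition part :: "nat list \<Rightarrow> nat \<Rightarrow> nat" where
  "part \<mu> i = (if 1 \<le> i \<and> i \<le> length \<mu> then \<mu> ! (i - 1) else 0)"

definition conjp :: "nat list \<Rightarrow> nat \<Rightarrow> nat" where
  "conjp \<mu> j = card {i. 1 \<le> i \<and> i \<le> length \<mu> \<and> j \<le> part \<mu> i}"

definition boxes :: "nat list \<Rightarrow> (nat \<times> nat) set" where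
  "boxes \<mu> = {(i, j). 1 \<le> i \<and> i \<le> length \<mu> \<and> 1 \<le> j \<and> j \<le> part \<mu> i}"

definition dnum :: "nat list \<Rightarrow> nat" where
  "dnum \<mu> = card {i. 1 \<le> i \<and> i \<le> length \<mu> \<and> i \<le> part \<mu> i}"

definition shift :: "int \<Rightarrow> (int \<Rightarrow> complex) \<Rightarrow> (int \<Rightarrow> complex)" where
  "shift r a = (\<lambda>i. a (i + r))"

definition dual :: "(int \<Rightarrow> complex) \<Rightarrow> (int \<Rightarrow> complex)" where
  "dual a = (\<lambda>i. - a (1 - i))"

definition esym :: "(int \<Rightarrow> complex) \<Rightarrow> nat \<Rightarrow> nat \<Rightarrow> complex" where
  "esym a m n = (\<Sum>S\<in>{S. S \<subseteq> {1..n} \<and> card S = m}. \<Prod>i\<in>S. a (int i))"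

text \<open>Value of h_k under the algebra homomorphism Lambda -> C determined by the values
  pv k of the power sums p_k, via Newton's identity k h_k = sum_{i=1}^k p_i h_{k-i}.\<close>
fun hval :: "(nat \<Rightarrow> complex) \<Rightarrow> nat \<Rightarrow> complex" where
  "hval pv 0 = 1"
| "hval pv (Suc k) = (\<Sum>i<Suc k. pv (Suc k - i) * hval pv i) / of_nat (Suc k)"

definition hka :: "(int \<Rightarrow> complex) \<Rightarrow> (nat \<Rightarrow> complex) \<Rightarrow> int \<Rightarrow> complex" where
  "hka a pv k = (if k < 0 then 0 else if k = 0 then 1 else
     (\<Sum>i\<in>{1..nat k}. (-1) ^ (nat k - i) * esym a (nat k - i) (nat k - 1) * hval pv i))"

text \<open>Value of s_{mu;a} = det[h_{mu_i-i+j; tau^{1-j} a}]_{i,j=1}^N with N = length mu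
  (homomorphisms commute with determinants).\<close>
definition sval :: "nat list \<Rightarrow> (int \<Rightarrow> complex) \<Rightarrow> (nat \<Rightarrow> complex) \<Rightarrow> complex" where
  "sval \<mu> a pv = (let N = length \<mu> in
     det (mat N N (\<lambda>(i, j). hka (shift (1 - int (j + 1)) a) pv
            (int (part \<mu> (i + 1)) - int (i + 1) + int (j + 1)))))"

text \<open>Power sums evaluated at (x;y), p_k -> sum x_i^k + (-1)^(k-1) sum y_j^k.\<close>
definition pval :: "(nat \<Rightarrow> complex) \<Rightarrow> (nat \<Rightarrow> complex) \<Rightarrow> nat \<Rightarrow> nat \<Rightarrow> complex" where
  "pval x y d k = (\<Sum>i\<in>{1..d}. x i ^ k) + (-1) ^ (k - 1) * (\<Sum>j\<in>{1..d}. y j ^ k)"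

text \<open>The point (x(mu); y(mu)) in Frobenius coordinates; for the empty diagram d = 0 and
  all power sums vanish, which agrees with the point (0;0).\<close>
definition xpt :: "(int \<Rightarrow> complex) \<Rightarrow> nat list \<Rightarrow> nat \<Rightarrow> complex" where
  "xpt a \<mu> i = a (int (part \<mu> i) - int i + 1)"

definition ypt :: "(int \<Rightarrow> complex) \<Rightarrow> nat list \<Rightarrow> nat \<Rightarrow> complex" where
  "ypt a \<mu> i = dual a (int (conjp \<mu> i) - int i + 1)"

definition pv_at :: "(int \<Rightarrow> complex) \<Rightarrow> nat list \<Rightarrow> nat \<Rightarrow> complex" where
  "pv_at a \<mu> = (if \<mu> = [] then (\<lambda>k. pval (\<lambda>_. 0) (\<lambda>_. 0) 1 k)
                 else pval (xpt a \<mu>) (ypt a \<mu>) (dnum \<mu>))"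

end

theory Submission
  imports Defs "HOL-Computational_Algebra.Formal_Power_Series"
begin


definition lam :: "nat list \<Rightarrow> nat \<Rightarrow> int" where
  "lam \<mu> r = int (part \<mu> r) - int r + 1"
definition kap :: "nat list \<Rightarrow> nat \<Rightarrow> int" where
  "kap \<mu> j = int j - int (conjp \<mu> j)"

lemma part_anti:
  assumes "young \<mu>" "1 \<le> r" "r \<le> s"
  shows "part \<mu> s \<le> part \<mu> r"
proof -
  have sr: "sorted (rev \<mu>)" using assms(1) unfolding young_def by simp
  show ?thesis
  proof (cases "s \<le> length \<mu>")
    case True
    then show ?thesis using sorted_rev_nth_mono[OF sr, of "r - 1" "s - 1"] assms
      unfolding part_def by auto
  next
    case False
    then show ?thesis unfolding part_def by auto
  qed
qed

lemma part_pos: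
  assumes "young \<mu>" "1 \<le> r" "r \<le> length \<mu>"
  shows "1 \<le> part \<mu> r"
proof -
  have "\<mu> ! (r - 1) \<in> set \<mu>" using assms by auto
  then have "\<mu> ! (r - 1) \<noteq> 0" using assms(1) unfolding young_def by metis
  then show ?thesis using assms unfolding part_def by auto
qed

lemma part_zero: "length \<mu> < r \<Longrightarrow> part \<mu> r = 0"
  unfolding part_def by auto

lemma downset_interval:
  fixes S :: "nat set"
  assumes "S \<subseteq> {1..N}" "\<And>i i'. i \<in> S \<Longrightarrow> 1 \<le> i' \<Longrightarrow> i' \<le> i \<Longrightarrow> i' \<in> S"
  shows "S = {1..card S}"
proof (cases "S = {}")
  case True then show ?thesis by simp
next
  case False
  have fin: "finite S" using assms(1) finite_subset by blast
  define m where "m = Max S"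
  have "m \<in> S" using fin False m_def by simp
  have "S = {1..m}"
  proof
    show "S \<subseteq> {1..m}" using assms(1) fin m_def by auto
    show "{1..m} \<subseteq> S" using assms(2) \<open>m \<in> S\<close> by auto
  qed
  then show ?thesis by simp
qed

lemma conjp_set:
  assumes "young \<mu>" "1 \<le> j"
  shows "{i. 1 \<le> i \<and> i \<le> length \<mu> \<and> j \<le> part \<mu> i} = {1..conjp \<mu> j}"
proof -
  have "{i. 1 \<le> i \<and> i \<le> length \<mu> \<and> j \<le> part \<mu> i} =
        {1..card {i. 1 \<le> i \<and> i \<le> length \<mu> \<and> j \<le> part \<mu> i}}"
    apply (rule downset_interval[of _ "length \<mu>"])
    using part_anti[OF assms(1)] by (auto intro: order.trans)
  then show ?thesis unfolding conjp_def by simp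
qed

lemma conjp_iff:
  assumes "young \<mu>" "1 \<le> j" "1 \<le> r"
  shows "r \<le> conjp \<mu> j \<longleftrightarrow> j \<le> part \<mu> r"
proof -
  have "r \<le> conjp \<mu> j \<longleftrightarrow> r \<in> {1..conjp \<mu> j}" using assms by auto
  also have "\<dots> \<longleftrightarrow> r \<le> length \<mu> \<and> j \<le> part \<mu> r"
    using conjp_set[OF assms(1,2)] assms(3) by blast
  also have "\<dots> \<longleftrightarrow> j \<le> part \<mu> r"
    using part_zero[of \<mu> r] assms(2) by (cases "r \<le> length \<mu>") auto
  finally show ?thesis .
qed

lemma conjp_le: "conjp \<mu> j \<le> length \<mu>"
proof -
  have "{i. 1 \<le> i \<and> i \<le> length \<mu> \<and> j \<le> part \<mu> i} \<subseteq> {1..length \<mu>}" by auto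
  then show ?thesis unfolding conjp_def using card_mono[of "{1..length \<mu>}"] by fastforce
qed

lemma dnum_set:
  assumes "young \<mu>"
  shows "{i. 1 \<le> i \<and> i \<le> length \<mu> \<and> i \<le> part \<mu> i} = {1..dnum \<mu>}"
proof -
  have "{i. 1 \<le> i \<and> i \<le> length \<mu> \<and> i \<le> part \<mu> i} =
        {1..card {i. 1 \<le> i \<and> i \<le> length \<mu> \<and> i \<le> part \<mu> i}}"
    apply (rule downset_interval[of _ "length \<mu>"])
    using part_anti[OF assms(1)] by (auto intro: order.trans)
  then show ?thesis unfolding dnum_def by simp
qed

lemma dnum_iff:
  assumes "young \<mu>" "1 \<le> r"
  shows "r \<le> dnum \<mu> \<longleftrightarrow> r \<le> part \<mu> r"
proof -
  have "r \<le> dnum \<mu> \<longleftrightarrow> r \<in> {1..dnum \<mu>}" using assms by auto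
  also have "\<dots> \<longleftrightarrow> r \<le> length \<mu> \<and> r \<le> part \<mu> r"
    using dnum_set[OF assms(1)] assms(2) by blast
  also have "\<dots> \<longleftrightarrow> r \<le> part \<mu> r"
    using part_zero[of \<mu> r] assms(2) by (cases "r \<le> length \<mu>") auto
  finally show ?thesis .
qed

lemma dnum_le: "young \<mu> \<Longrightarrow> dnum \<mu> \<le> length \<mu>"
proof -
  have "{i. 1 \<le> i \<and> i \<le> length \<mu> \<and> i \<le> part \<mu> i} \<subseteq> {1..length \<mu>}" by auto
  then show ?thesis unfolding dnum_def using card_mono[of "{1..length \<mu>}"] by fastforce
qed

lemma lam_kap_ne:
  assumes "young \<mu>" "1 \<le> r" "1 \<le> j"
  shows "lam \<mu> r \<noteq> kap \<mu> j"
proof (cases "j \<le> part \<mu> r")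
  case True
  then have "r \<le> conjp \<mu> j" using conjp_iff[OF assms(1,3,2)] by simp
  then show ?thesis using True unfolding lam_def kap_def by linarith
next
  case False
  then have "\<not> r \<le> conjp \<mu> j" using conjp_iff[OF assms(1,3,2)] by simp
  then show ?thesis using False unfolding lam_def kap_def by linarith
qed

lemma lam_strict:
  assumes "young \<mu>" "1 \<le> r" "r < s"
  shows "lam \<mu> s < lam \<mu> r"
  using part_anti[OF assms(1,2), of s] assms unfolding lam_def by linarith

lemma kap_strict:
  assumes "young \<mu>" "1 \<le> j" "j < j'"
  shows "kap \<mu> j < kap \<mu> j'"
proof -
  have "conjp \<mu> j' \<le> conjp \<mu> j"
  proof (cases "conjp \<mu> j' = 0")
    case False
    then have "conjp \<mu> j' \<le> conjp \<mu> j \<longleftrightarrow> j \<le> part \<mu> (conjp \<mu> j')"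
      using conjp_iff[OF assms(1,2), of "conjp \<mu> j'"] by simp
    moreover have "j' \<le> part \<mu> (conjp \<mu> j')"
      using conjp_iff[OF assms(1), of j' "conjp \<mu> j'"] False assms by simp
    ultimately show ?thesis using assms by simp
  qed simp
  then show ?thesis using assms unfolding kap_def by linarith
qed

lemma inj_lam: "young \<mu> \<Longrightarrow> inj_on (lam \<mu>) {1..}"
  unfolding inj_on_def by (metis atLeast_iff lam_strict less_irrefl nat_neq_iff)

lemma inj_kap: "young \<mu> \<Longrightarrow> inj_on (kap \<mu>) {1..}"
  unfolding inj_on_def by (metis atLeast_iff kap_strict less_irrefl nat_neq_iff)

lemma lam_lower:
  assumes "young \<mu>" "1 \<le> r" "r \<le> length \<mu>"
  shows "2 - int (length \<mu>) \<le> lam \<mu> r"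
  using part_pos[OF assms] assms unfolding lam_def by linarith

lemma kap_lower: "1 \<le> j \<Longrightarrow> 1 - int (length \<mu>) \<le> kap \<mu> j"
  using conjp_le[of \<mu> j] unfolding kap_def by linarith

lemma row_split:
  assumes y: "young \<mu>" and i: "1 \<le> i" "i \<le> length \<mu>"
  shows "{1 - int (length \<mu>) .. lam \<mu> i - 1} = lam \<mu> ` {i+1..length \<mu>} \<union> kap \<mu> ` {1..part \<mu> i}"
    and "lam \<mu> ` {i+1..length \<mu>} \<inter> kap \<mu> ` {1..part \<mu> i} = {}"
proof -
  let ?N = "length \<mu>"
  let ?A = "lam \<mu> ` {i+1..?N}" and ?B = "kap \<mu> ` {1..part \<mu> i}"
  show dis: "?A \<inter> ?B = {}" using lam_kap_ne[OF y] i by fastforce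
  have sA: "?A \<subseteq> {1 - int ?N .. lam \<mu> i - 1}"
  proof
    fix z assume "z \<in> ?A"
    then obtain r where r: "r \<in> {i+1..?N}" "z = lam \<mu> r" by auto
    then show "z \<in> {1 - int ?N .. lam \<mu> i - 1}"
      using lam_lower[OF y, of r] lam_strict[OF y, of i r] i by auto
  qed
  have sB: "?B \<subseteq> {1 - int ?N .. lam \<mu> i - 1}"
  proof
    fix z assume "z \<in> ?B"
    then obtain j where j: "j \<in> {1..part \<mu> i}" "z = kap \<mu> j" by auto
    then have "i \<le> conjp \<mu> j" using conjp_iff[OF y, of j i] i by auto
    then show "z \<in> {1 - int ?N .. lam \<mu> i - 1}"
      using kap_lower[of j \<mu>] j unfolding kap_def lam_def by auto
  qed
  have cA: "card ?A = ?N - i"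
    using card_image[OF inj_on_subset[OF inj_lam[OF y]], of "{i+1..?N}"] i by auto
  have cB: "card ?B = part \<mu> i"
    using card_image[OF inj_on_subset[OF inj_kap[OF y]], of "{1..part \<mu> i}"] by auto
  have "card (?A \<union> ?B) = ?N - i + part \<mu> i"
    using card_Un_disjoint[OF _ _ dis] cA cB by simp
  also have "\<dots> = card {1 - int ?N .. lam \<mu> i - 1}"
    unfolding lam_def using i by simp
  finally have "card (?A \<union> ?B) = card {1 - int ?N .. lam \<mu> i - 1}" .
  moreover have "?A \<union> ?B \<subseteq> {1 - int ?N .. lam \<mu> i - 1}" using sA sB by (rule Un_least)
  ultimately show "{1 - int ?N .. lam \<mu> i - 1} = ?A \<union> ?B"
    using card_subset_eq[of "{1 - int ?N .. lam \<mu> i - 1}" "?A \<union> ?B"] by simp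
qed

lemma frob_split:
  assumes y: "young \<mu>"
  shows "{1 - int (length \<mu>) .. 0} = lam \<mu> ` {dnum \<mu>+1..length \<mu>} \<union> kap \<mu> ` {1..dnum \<mu>}"
    and "lam \<mu> ` {dnum \<mu>+1..length \<mu>} \<inter> kap \<mu> ` {1..dnum \<mu>} = {}"
proof -
  let ?N = "length \<mu>" and ?d = "dnum \<mu>"
  let ?A = "lam \<mu> ` {?d+1..?N}" and ?B = "kap \<mu> ` {1..?d}"
  show dis: "?A \<inter> ?B = {}"
  proof (rule ccontr)
    assume "?A \<inter> ?B \<noteq> {}"
    then obtain r j where "r \<in> {?d+1..?N}" "j \<in> {1..?d}" "lam \<mu> r = kap \<mu> j" by blast
    then show False using lam_kap_ne[OF y, of r j] by simp
  qed
  have sA: "?A \<subseteq> {1 - int ?N .. 0}"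
  proof
    fix z assume "z \<in> ?A"
    then obtain r where r: "r \<in> {?d+1..?N}" "z = lam \<mu> r" by blast
    have r1: "1 \<le> r" "r \<le> ?N" "\<not> r \<le> ?d" using r(1) by auto
    have "\<not> r \<le> part \<mu> r" using dnum_iff[OF y r1(1)] r1(3) by blast
    then have "part \<mu> r < r" by simp
    moreover have "2 - int ?N \<le> lam \<mu> r" using lam_lower[OF y r1(1,2)] .
    ultimately show "z \<in> {1 - int ?N .. 0}"
      using r(2) unfolding lam_def by simp
  qed
  have sB: "?B \<subseteq> {1 - int ?N .. 0}"
  proof
    fix z assume "z \<in> ?B"
    then obtain j where j: "j \<in> {1..?d}" "z = kap \<mu> j" by blast
    have j1: "1 \<le> j" "j \<le> ?d" using j(1) by auto
    have "j \<le> part \<mu> j" using dnum_iff[OF y j1(1)] j1(2) by blast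
    then have "j \<le> conjp \<mu> j" using conjp_iff[OF y j1(1) j1(1)] by blast
    moreover have "1 - int ?N \<le> kap \<mu> j" using kap_lower[OF j1(1)] .
    ultimately show "z \<in> {1 - int ?N .. 0}"
      using j(2) unfolding kap_def by simp
  qed
  have cA: "card ?A = ?N - ?d"
  proof -
    have "inj_on (lam \<mu>) {?d+1..?N}" by (rule inj_on_subset[OF inj_lam[OF y]]) auto
    then show ?thesis by (simp add: card_image)
  qed
  have cB: "card ?B = ?d"
  proof -
    have "inj_on (kap \<mu>) {1..?d}" by (rule inj_on_subset[OF inj_kap[OF y]]) auto
    then show ?thesis by (simp add: card_image)
  qed
  have "card (?A \<union> ?B) = card ?A + card ?B"
    by (rule card_Un_disjoint[OF _ _ dis]) auto
  also have "\<dots> = ?N" using cA cB dnum_le[OF y] by simp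
  also have "\<dots> = card {1 - int ?N .. 0}" by simp
  finally have "card (?A \<union> ?B) = card {1 - int ?N .. 0}" .
  moreover have "?A \<union> ?B \<subseteq> {1 - int ?N .. 0}" using sA sB by (rule Un_least)
  ultimately show "{1 - int ?N .. 0} = ?A \<union> ?B"
    using card_subset_eq[of "{1 - int ?N .. 0}" "?A \<union> ?B"] by simp
qed



no_notation vec_index (infixl \<open>$\<close> 100)
notation fps_nth (infixl \<open>$\<close> 75)

definition fac :: "complex \<Rightarrow> complex fps" where
  "fac c = 1 - fps_const c * fps_X"
definition dbound :: "complex fps \<Rightarrow> nat \<Rightarrow> bool" where
  "dbound F n \<longleftrightarrow> (\<forall>m>n. F $ m = 0)"
definition cf :: "complex fps \<Rightarrow> int \<Rightarrow> complex" where
  "cf F n = (if n < 0 then 0 else F $ nat n)"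

lemma fac_nth0[simp]: "fac c $ 0 = 1"
  unfolding fac_def by simp

lemma prod_fac_nth0[simp]: "(\<Prod>i\<in>A. fac (f i)) $ 0 = 1"
proof (cases "finite A")
  case True then show ?thesis by (induction A rule: finite_induct) simp_all
qed simp

lemma fac_mult_Suc: "(fac c * H) $ Suc n = H $ Suc n - c * H $ n"
  unfolding fac_def by (simp add: algebra_simps)

lemma dbound_fac: "dbound (fac c) 1"
  unfolding dbound_def fac_def by simp

lemma dbound_one: "dbound 1 0"
  unfolding dbound_def by simp

lemma dbound_mono: "dbound F n \<Longrightarrow> n \<le> m \<Longrightarrow> dbound F m"
  unfolding dbound_def by auto

lemma dbound_mult:
  assumes "dbound F n" "dbound G m"
  shows "dbound (F * G) (n + m)"
  unfolding dbound_def
proof (intro allI impI)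
  fix k assume k: "k > n + m"
  have "(F * G) $ k = (\<Sum>i=0..k. F$i * G$(k - i))" by (rule fps_mult_nth)
  also have "\<dots> = 0"
  proof (rule sum.neutral, intro ballI)
    fix i assume "i \<in> {0..k}"
    show "F$i * G$(k - i) = 0"
    proof (cases "i > n")
      case True then show ?thesis using assms(1) unfolding dbound_def by simp
    next
      case False then have "k - i > m" using k by linarith
      then show ?thesis using assms(2) unfolding dbound_def by simp
    qed
  qed
  finally show "(F * G) $ k = 0" .
qed

lemma dbound_prod_fac:
  assumes "finite A"
  shows "dbound (\<Prod>i\<in>A. fac (f i)) (card A)"
  using assms
proof (induction A rule: finite_induct)
  case empty then show ?case using dbound_one by simp
next
  case (insert x F)
  then show ?case using dbound_mult[OF dbound_fac insert.IH] by simp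
qed

lemma cf_Xpow: "cf (fps_X ^ s * F) n = cf F (n - int s)"
  unfolding cf_def by (auto simp: fps_X_power_mult_nth nat_diff_distrib)

lemma cf_dbound: "dbound F m \<Longrightarrow> int m < n \<Longrightarrow> cf F n = 0"
  unfolding cf_def dbound_def by auto

lemma inv_fac: "inverse (fac c) * fac c = 1"
  by (rule inverse_mult_eq_1) simp

lemma geo_step:
  assumes "dbound F n"
  shows "(F * inverse (fac x)) $ Suc n = x * (F * inverse (fac x)) $ n"
proof -
  let ?G = "F * inverse (fac x)"
  have e: "fac x * ?G = F" using inv_fac[of x] by (simp add: algebra_simps)
  have "(fac x * ?G) $ Suc n = 0" unfolding e using assms unfolding dbound_def by simp
  then show ?thesis unfolding fac_mult_Suc by simp
qed

lemma diag_value: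
  assumes "finite T"
  shows "((\<Prod>m\<in>T. fac (b m)) * inverse (fac x)) $ card T = (\<Prod>m\<in>T. x - b m)"
  using assms
proof (induction T rule: finite_induct)
  case empty then show ?case by simp
next
  case (insert m T)
  let ?G = "(\<Prod>m\<in>T. fac (b m)) * inverse (fac x)"
  have "((\<Prod>m\<in>insert m T. fac (b m)) * inverse (fac x)) $ card (insert m T)
        = (fac (b m) * ?G) $ Suc (card T)"
    using insert by (simp add: algebra_simps)
  also have "\<dots> = ?G $ Suc (card T) - b m * ?G $ card T" by (rule fac_mult_Suc)
  also have "\<dots> = (x - b m) * ?G $ card T"
    using geo_step[OF dbound_prod_fac[OF insert(1)]] by (simp add: algebra_simps)
  finally show ?case using insert by simp
qed

lemma fps_const_prod: "finite T \<Longrightarrow> (\<Prod>l\<in>T. fps_const (b l :: complex)) = fps_const (\<Prod>l\<in>T. b l)"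
  by (induction T rule: finite_induct) (simp_all del: fps_const_mult add: fps_const_mult[symmetric])

lemma fps_const_prod_old: "finite T \<Longrightarrow> (\<Prod>l\<in>T. fps_const (b l)) = fps_const (\<Prod>l\<in>T. b l)"
  by (induction T rule: finite_induct) (simp_all del: fps_const_mult add: fps_const_mult[symmetric])

lemma neg1_fps: "(-1 :: complex fps) ^ n = fps_const ((-1) ^ n)"
proof -
  have "(-1 :: complex fps) = fps_const (-1)" by (metis fps_const_neg fps_const_1_eq_1)
  then show ?thesis by simp
qed

lemma prod_negX:
  fixes b :: "'x \<Rightarrow> complex"
  assumes "finite T"
  shows "(\<Prod>l\<in>T. - (fps_const (b l) * fps_X)) = fps_const ((-1) ^ card T * (\<Prod>l\<in>T. b l)) * fps_X ^ card T"
proof -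
  have "(\<Prod>l\<in>T. - (fps_const (b l) * fps_X)) = (-1) ^ card T * (\<Prod>l\<in>T. fps_const (b l) * fps_X)"
    by (rule prod_uminus)
  also have "\<dots> = (-1) ^ card T * ((\<Prod>l\<in>T. fps_const (b l)) * fps_X ^ card T)"
    by (simp add: prod.distrib)
  also have "\<dots> = fps_const ((-1) ^ card T) * (fps_const (\<Prod>l\<in>T. b l) * fps_X ^ card T)"
    by (simp only: neg1_fps fps_const_prod[OF assms])
  also have "\<dots> = fps_const ((-1) ^ card T * (\<Prod>l\<in>T. b l)) * fps_X ^ card T"
    by (simp add: mult.assoc)
  finally show ?thesis .
qed

lemma esym_coeff:
  "(\<Prod>l\<in>{1..n}. fac (b (int l))) $ s = (-1) ^ s * esym b s n"
proof -
  have "(\<Prod>l\<in>{1..n}. fac (b (int l))) = (\<Prod>l\<in>{1..n}. - (fps_const (b (int l)) * fps_X) + 1)"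
    unfolding fac_def by simp
  also have "\<dots> = (\<Sum>T\<in>Pow {1..n}. (\<Prod>l\<in>T. - (fps_const (b (int l)) * fps_X)) * (\<Prod>l\<in>{1..n} - T. 1))"
    by (rule prod_add) simp
  also have "\<dots> = (\<Sum>T\<in>Pow {1..n}. fps_const ((-1) ^ card T * (\<Prod>l\<in>T. b (int l))) * fps_X ^ card T)"
    by (rule sum.cong) (auto simp: prod_negX[OF finite_subset] simp del: fps_const_mult)
  finally have eq: "(\<Prod>l\<in>{1..n}. fac (b (int l))) = (\<Sum>T\<in>Pow {1..n}. fps_const ((-1) ^ card T * (\<Prod>l\<in>T. b (int l))) * fps_X ^ card T)" .
  have "(\<Prod>l\<in>{1..n}. fac (b (int l))) $ s =
      (\<Sum>T\<in>Pow {1..n}. (fps_const ((-1) ^ card T * (\<Prod>l\<in>T. b (int l))) * fps_X ^ card T) $ s)"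
    unfolding eq fps_sum_nth ..
  also have "\<dots> = (\<Sum>T\<in>Pow {1..n}. (if card T = s then (-1) ^ s * (\<Prod>l\<in>T. b (int l)) else 0))"
  proof (rule sum.cong)
    fix T
    show "(fps_const ((-1) ^ card T * (\<Prod>l\<in>T. b (int l))) * fps_X ^ card T) $ s =
          (if card T = s then (-1) ^ s * (\<Prod>l\<in>T. b (int l)) else 0)"
      unfolding fps_X_power_mult_right_nth fps_nth_fps_const by auto
  qed simp
  also have "\<dots> = (\<Sum>T\<in>{T\<in>Pow {1..n}. card T = s}. (-1) ^ s * (\<Prod>l\<in>T. b (int l)))"
    by (rule sum.inter_filter[symmetric]) simp
  also have "\<dots> = (-1) ^ s * esym b s n"
    unfolding esym_def sum_distrib_left[symmetric] Pow_def by simp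
  finally show ?thesis .
qed

lemma esym_zero: "n < m \<Longrightarrow> esym b m n = 0"
proof -
  assume "n < m"
  have e: "{S. S \<subseteq> {1..n} \<and> card S = m} = {}"
  proof (rule ccontr)
    assume "{S. S \<subseteq> {1..n} \<and> card S = m} \<noteq> {}"
    then obtain S where "S \<subseteq> {1..n}" "card S = m" by blast
    then have "m \<le> n" using card_mono[of "{1..n}" S] by simp
    then show False using \<open>n < m\<close> by simp
  qed
  show ?thesis unfolding esym_def e by simp
qed

lemma hka_fps:
  "hka b pv k = cf ((\<Prod>l\<in>{1..nat k - 1}. fac (b (int l))) * Abs_fps (hval pv)) k"
proof (cases "k < 1")
  case True
  then show ?thesis unfolding hka_def cf_def by auto
next
  case False
  define K where "K = nat k"
  have K: "k = int K" "1 \<le> K" using False K_def by auto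
  let ?P = "\<Prod>l\<in>{1..K - 1}. fac (b (int l))"
  have "cf (?P * Abs_fps (hval pv)) k = (\<Sum>i=0..K. ?P $ i * hval pv (K - i))"
    unfolding cf_def using K by (simp add: fps_mult_nth)
  also have "\<dots> = (\<Sum>i=0..K. ?P $ (K - i) * hval pv i)"
    by (subst sum.atLeastAtMost_rev) simp
  also have "\<dots> = (\<Sum>i=1..K. ?P $ (K - i) * hval pv i)"
  proof -
    have "(\<Sum>i=0..K. ?P $ (K - i) * hval pv i) = ?P $ K * hval pv 0 + (\<Sum>i=1..K. ?P $ (K - i) * hval pv i)"
      by (simp add: sum.atLeast_Suc_atMost)
    moreover have "?P $ K = 0" unfolding esym_coeff using esym_zero[of "K - 1" K] K by simp
    ultimately show ?thesis by simp
  qed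
  also have "\<dots> = hka b pv k"
    unfolding hka_def esym_coeff using K by (simp add: K_def[symmetric] mult.assoc)
  finally show ?thesis by (simp add: K_def)
qed


definition geo :: "complex \<Rightarrow> complex fps" where
  "geo c = Abs_fps (\<lambda>k. if k = 0 then 0 else c ^ k)"

lemma geo_fac: "geo c * fac c = fps_const c * fps_X"
proof (rule fps_ext)
  fix n show "(geo c * fac c) $ n = (fps_const c * fps_X) $ n"
  proof (cases n)
    case 0 then show ?thesis unfolding geo_def by simp
  next
    case (Suc m)
    have "(geo c * fac c) $ n = (fac c * geo c) $ Suc m" using Suc by (simp add: mult.commute)
    also have "\<dots> = geo c $ Suc m - c * geo c $ m" by (rule fac_mult_Suc)
    finally show ?thesis using Suc unfolding geo_def by auto
  qed
qed

lemma X_deriv_fac: "fps_X * fps_deriv (fac c) = - geo c * fac c"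
proof -
  have "fps_X * fps_deriv (fac c) = fps_X * (- fps_const c)"
    unfolding fac_def by (simp add: fps_const_neg[symmetric] del: fps_const_neg)
  also have "\<dots> = - (fps_const c * fps_X)" by (simp only: mult_minus_right mult.commute)
  also have "\<dots> = - geo c * fac c" unfolding geo_fac[symmetric] by simp
  finally show ?thesis .
qed

lemma X_deriv_prod:
  assumes "finite A"
  shows "fps_X * fps_deriv (\<Prod>i\<in>A. fac (f i)) = - (\<Sum>i\<in>A. geo (f i)) * (\<Prod>i\<in>A. fac (f i))"
  using assms
proof (induction A rule: finite_induct)
  case empty then show ?case by simp
next
  case (insert a A)
  let ?P = "\<Prod>i\<in>A. fac (f i)"
  have "fps_X * fps_deriv (\<Prod>i\<in>insert a A. fac (f i)) = fps_X * fps_deriv (fac (f a) * ?P)"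
    using insert by simp
  also have "\<dots> = (fps_X * fps_deriv (fac (f a))) * ?P + fac (f a) * (fps_X * fps_deriv ?P)"
    by (simp add: algebra_simps)
  also have "\<dots> = - (geo (f a) + (\<Sum>i\<in>A. geo (f i))) * (fac (f a) * ?P)"
    unfolding X_deriv_fac insert.IH by (simp add: algebra_simps)
  finally show ?case using insert by simp
qed

lemma geo_nth: "geo c $ k = (if k = 0 then 0 else c ^ k)"
  unfolding geo_def by simp

lemma newton:
  fixes x y :: "nat \<Rightarrow> complex"
  shows "hval (pval x y d) n =
    ((\<Prod>i\<in>{1..d}. fac (- y i)) * inverse (\<Prod>i\<in>{1..d}. fac (x i))) $ n"
proof -
  define U where "U = (\<Prod>i\<in>{1..d}. fac (- y i))"
  define V where "V = (\<Prod>i\<in>{1..d}. fac (x i))"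
  define H where "H = U * inverse V"
  define SU where "SU = (\<Sum>i\<in>{1..d}. geo (- y i))"
  define SV where "SV = (\<Sum>i\<in>{1..d}. geo (x i))"
  have V0: "V $ 0 = 1" unfolding V_def by simp
  have HV: "H * V = U" unfolding H_def using inverse_mult_eq_1[of V] V0 by (simp add: mult.assoc)
  have XU: "fps_X * fps_deriv U = - SU * U" unfolding U_def SU_def by (rule X_deriv_prod) simp
  have XV: "fps_X * fps_deriv V = - SV * V" unfolding V_def SV_def by (rule X_deriv_prod) simp
  have e1: "fps_X * fps_deriv (H * V) = (fps_X * fps_deriv H) * V + H * (fps_X * fps_deriv V)"
    by (simp add: algebra_simps)
  have e2: "fps_X * fps_deriv (H * V) = - SU * (H * V)" unfolding HV XU ..
  have "(fps_X * fps_deriv H) * V + H * (- SV * V) = - SU * (H * V)"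
    using e1 e2 unfolding XV by simp
  then have "(fps_X * fps_deriv H) * V = - SU * (H * V) - H * (- SV * V)"
    by (rule add_implies_diff)
  also have "\<dots> = ((SV - SU) * H) * V" by (simp add: algebra_simps)
  finally have "(fps_X * fps_deriv H) * V = ((SV - SU) * H) * V" .
  moreover have "V \<noteq> 0" using V0 by auto
  ultimately have key: "fps_X * fps_deriv H = (SV - SU) * H" by simp
  have S0: "(SV - SU) $ 0 = 0" unfolding SV_def SU_def fps_sub_nth fps_sum_nth geo_nth by simp
  have Sk: "(SV - SU) $ k = pval x y d k" if "k \<ge> 1" for k
  proof -
    have "SV $ k = (\<Sum>i\<in>{1..d}. x i ^ k)" unfolding SV_def fps_sum_nth geo_nth using that by simp
    moreover have "SU $ k = (\<Sum>i\<in>{1..d}. (- y i) ^ k)" unfolding SU_def fps_sum_nth geo_nth using that by simp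
    ultimately have A: "(SV - SU) $ k = (\<Sum>i\<in>{1..d}. x i ^ k) - (\<Sum>i\<in>{1..d}. (- y i) ^ k)"
      by (simp only: fps_sub_nth)
    have B: "(\<Sum>i\<in>{1..d}. (- y i) ^ k) = (-1) ^ k * (\<Sum>i\<in>{1..d}. y i ^ k)"
      unfolding sum_distrib_left by (rule sum.cong) (simp_all only: power_mult_distrib[symmetric] mult_minus1)
    have C: "(-1::complex) ^ (k - 1) = - ((-1) ^ k)"
      using that by (cases k) auto
    show ?thesis unfolding pval_def A B C by simp
  qed
  have rec: "of_nat (Suc n) * H $ Suc n = (\<Sum>i<Suc n. pval x y d (Suc n - i) * H $ i)" for n
  proof -
    have "of_nat (Suc n) * H $ Suc n = (fps_X * fps_deriv H) $ Suc n" by simp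
    also have "\<dots> = ((SV - SU) * H) $ Suc n" unfolding key ..
    also have "\<dots> = (\<Sum>i=0..Suc n. (SV - SU) $ i * H $ (Suc n - i))" by (rule fps_mult_nth)
    also have "\<dots> = (\<Sum>i=0..Suc n. (SV - SU) $ (Suc n - i) * H $ i)"
      by (subst sum.atLeastAtMost_rev) simp
    also have "\<dots> = (\<Sum>i=0..n. (SV - SU) $ (Suc n - i) * H $ i)"
      using S0 by (simp add: sum.atLeast0_atMost_Suc)
    also have "\<dots> = (\<Sum>i<Suc n. pval x y d (Suc n - i) * H $ i)"
      by (rule sum.cong) (auto simp del: fps_sub_nth simp add: Sk)
    finally show ?thesis .
  qed
  have "hval (pval x y d) m = H $ m" for m
  proof (induction m rule: less_induct)
    case (less m)
    show ?case
    proof (cases m)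
      case 0 then show ?thesis unfolding H_def U_def V_def by simp
    next
      case (Suc n)
      have "hval (pval x y d) m = (\<Sum>i<Suc n. pval x y d (Suc n - i) * H $ i) / of_nat (Suc n)"
        using Suc less.IH by simp
      also have "\<dots> = H $ m" unfolding rec[symmetric] Suc by (simp del: of_nat_Suc)
      finally show ?thesis .
    qed
  qed
  then show ?thesis unfolding H_def U_def V_def .
qed


definition PP :: "(int \<Rightarrow> complex) \<Rightarrow> int set \<Rightarrow> complex fps" where
  "PP a S = (\<Prod>m\<in>S. fac (a m))"

lemma PP_split:
  assumes "u \<le> v" "v \<le> w + 1"
  shows "PP a {u..w} = PP a {u..v-1} * PP a {v..w}"
proof -
  have "{u..w} = {u..v-1} \<union> {v..w}" using assms by auto
  then show ?thesis unfolding PP_def by (simp add: prod.union_disjoint)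
qed

lemma PP_nth0[simp]: "PP a S $ 0 = 1"
  unfolding PP_def by simp

lemma PP_image:
  assumes "inj_on g A"
  shows "PP a (g ` A) = (\<Prod>r\<in>A. fac (a (g r)))"
  unfolding PP_def using prod.reindex[OF assms] by simp

lemma inv_cancel: "F $ 0 = 1 \<Longrightarrow> F * inverse F = (1::complex fps)"
  by (rule inverse_mult_eq_1') simp

lemma dbound_zero_const: "dbound F 0 \<Longrightarrow> F = fps_const (F $ 0)"
  unfolding dbound_def by (intro fps_ext) auto

lemma dbound_diff: "dbound F n \<Longrightarrow> dbound G n \<Longrightarrow> dbound (F - G) n"
  unfolding dbound_def by simp

lemma dbound_cmult: "dbound G n \<Longrightarrow> dbound (fps_const c * G) n"
  unfolding dbound_def by simp

lemma newton_basis: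
  fixes g :: "nat \<Rightarrow> complex"
  assumes "1 \<le> n" "dbound F (n - 1)"
  shows "\<exists>c. F = (\<Sum>l\<in>{1..n}. fps_const (c l) * fps_X ^ (n - l) * (\<Prod>r\<in>{1..<l}. fac (g r))) \<and> c n = F $ 0"
  using assms
proof (induction n arbitrary: F rule: nat_induct_at_least)
  case base
  have "F = fps_const (F $ 0)" using base dbound_zero_const by simp
  then show ?case by (intro exI[of _ "\<lambda>_. F $ 0"]) simp
next
  case (Suc n)
  let ?G = "\<Prod>r\<in>{1..<Suc n}. fac (g r)"
  define F' where "F' = F - fps_const (F $ 0) * ?G"
  have F'0: "F' $ 0 = 0" unfolding F'_def by simp
  have dG: "dbound ?G n" using dbound_prod_fac[of "{1..<Suc n}" g] by simp
  have dF': "dbound F' n" unfolding F'_def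
    using dbound_diff[OF _ dbound_cmult[OF dG]] Suc.prems by simp
  define F'' where "F'' = fps_shift 1 F'"
  have F'X: "F' = fps_X * F''"
    unfolding F''_def by (intro fps_ext) (auto simp: F'0)
  have dF'': "dbound F'' (n - 1)"
    using dF' Suc.hyps unfolding dbound_def F''_def by auto
  obtain c where c: "F'' = (\<Sum>l\<in>{1..n}. fps_const (c l) * fps_X ^ (n - l) * (\<Prod>r\<in>{1..<l}. fac (g r)))"
    using Suc.IH[OF dF''] by blast
  define c' where "c' = c(Suc n := F $ 0)"
  have "F = F' + fps_const (F $ 0) * ?G" unfolding F'_def by (simp only: diff_add_cancel)
  then have "F = fps_X * F'' + fps_const (F $ 0) * ?G" unfolding F'X .
  also have "fps_X * F'' = (\<Sum>l\<in>{1..n}. fps_const (c' l) * fps_X ^ (Suc n - l) * (\<Prod>r\<in>{1..<l}. fac (g r)))"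
    unfolding c sum_distrib_left
  proof (rule sum.cong)
    fix l assume "l \<in> {1..n}"
    then have "Suc n - l = Suc (n - l)" "c' l = c l" unfolding c'_def by auto
    then show "fps_X * (fps_const (c l) * fps_X ^ (n - l) * (\<Prod>r\<in>{1..<l}. fac (g r))) =
      fps_const (c' l) * fps_X ^ (Suc n - l) * (\<Prod>r\<in>{1..<l}. fac (g r))"
      by (simp add: algebra_simps)
  qed simp
  also have "fps_const (F $ 0) * ?G = fps_const (c' (Suc n)) * fps_X ^ (Suc n - Suc n) * ?G"
    unfolding c'_def by simp
  finally have "F = (\<Sum>l\<in>{1..Suc n}. fps_const (c' l) * fps_X ^ (Suc n - l) * (\<Prod>r\<in>{1..<l}. fac (g r)))"
    by (simp add: sum.cl_ivl_Suc)
  moreover have "c' (Suc n) = F $ 0" unfolding c'_def by simp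
  ultimately show ?case by blast
qed

lemma cf_sum: "finite A \<Longrightarrow> cf (\<Sum>l\<in>A. F l) n = (\<Sum>l\<in>A. cf (F l) n)"
  unfolding cf_def by (simp add: fps_sum_nth)

lemma cf_cmult: "cf (fps_const c * F) n = c * cf F n"
  unfolding cf_def by simp

lemma cf_nonneg: "0 \<le> n \<Longrightarrow> cf F n = F $ nat n"
  unfolding cf_def by simp

lemma prod_shift_PP:
  "(\<Prod>l\<in>{1..nat k - 1}. fac (shift (1 - j) a (int l))) = PP a {2 - j .. k - j}"
proof -
  have "(\<Prod>l\<in>{1..nat k - 1}. fac (shift (1 - j) a (int l))) = (\<Prod>m\<in>{2 - j .. k - j}. fac (a m))"
    by (rule prod.reindex_bij_witness[where i = "\<lambda>m. nat (m + j - 1)" and j = "\<lambda>l. int l + 1 - j"])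
       (auto simp: shift_def algebra_simps)
  then show ?thesis unfolding PP_def .
qed


locale ctx =
  fixes a :: "int \<Rightarrow> complex" and \<mu> :: "nat list"
  assumes y: "young \<mu>" and ne: "\<mu> \<noteq> []"
begin

abbreviation "N \<equiv> length \<mu>"
abbreviation "d \<equiv> dnum \<mu>"

definition "Qt = PP a {1 - int N..0}"
definition "Dt = (\<Prod>r\<in>{1..N}. fac (a (lam \<mu> r)))"
definition "At i = PP a {1 - int N..lam \<mu> i - 1}"
definition "Bt j = PP a {2 - int j..0}"
definition "Gt l = (\<Prod>r\<in>{1..<l}. fac (a (lam \<mu> r)))"

lemma Dt0: "Dt $ 0 = 1" unfolding Dt_def by simp

lemma W: "Abs_fps (hval (pv_at a \<mu>)) = Qt * inverse Dt"
proof -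
  define U where "U = (\<Prod>i\<in>{1..d}. fac (- ypt a \<mu> i))"
  define V where "V = (\<Prod>i\<in>{1..d}. fac (xpt a \<mu> i))"
  define R where "R = (\<Prod>r\<in>{d+1..N}. fac (a (lam \<mu> r)))"
  have "hval (pv_at a \<mu>) n = (U * inverse V) $ n" for n
    unfolding pv_at_def U_def V_def using ne newton by simp
  then have H: "Abs_fps (hval (pv_at a \<mu>)) = U * inverse V" by (intro fps_ext) simp
  have U': "U = PP a (kap \<mu> ` {1..d})"
  proof -
    have "inj_on (kap \<mu>) {1..d}" by (rule inj_on_subset[OF inj_kap[OF y]]) auto
    then have "PP a (kap \<mu> ` {1..d}) = (\<Prod>i\<in>{1..d}. fac (a (kap \<mu> i)))" by (rule PP_image)
    also have "\<dots> = U" unfolding U_def ypt_def dual_def kap_def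
      by (rule prod.cong) (simp_all add: algebra_simps)
    finally show ?thesis by simp
  qed
  have V': "V = (\<Prod>i\<in>{1..d}. fac (a (lam \<mu> i)))" unfolding V_def xpt_def lam_def ..
  have R': "R = PP a (lam \<mu> ` {d+1..N})"
  proof -
    have "inj_on (lam \<mu>) {d+1..N}" by (rule inj_on_subset[OF inj_lam[OF y]]) auto
    then show ?thesis unfolding R_def by (simp add: PP_image)
  qed
  have Q: "Qt = R * U"
    unfolding Qt_def R' U' frob_split(1)[OF y] PP_def
    by (rule prod.union_disjoint) (use frob_split(2)[OF y] in auto)
  have D: "Dt = V * R"
  proof -
    have "{1..N} = {1..d} \<union> {d+1..N}" using dnum_le[OF y] by auto
    then show ?thesis unfolding Dt_def V' R_def by (simp add: prod.union_disjoint)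
  qed
  have R0: "R $ 0 = 1" unfolding R_def by simp
  have "Qt * inverse Dt = (U * inverse V) * (R * inverse R)"
    unfolding Q D fps_inverse_mult by (simp add: algebra_simps)
  also have "\<dots> = U * inverse V" using inv_cancel[OF R0] by simp
  finally show ?thesis using H by simp
qed

lemma entry:
  assumes i: "1 \<le> i" "i \<le> N" and j: "1 \<le> j" "j \<le> N"
  shows "hka (shift (1 - int j) a) (pv_at a \<mu>) (lam \<mu> i - 1 + int j) =
         cf (At i * Bt j * inverse Dt) (lam \<mu> i - 1 + int j)"
proof -
  define k where "k = lam \<mu> i - 1 + int j"
  have "hka (shift (1 - int j) a) (pv_at a \<mu>) k = cf (PP a {2 - int j .. k - int j} * (Qt * inverse Dt)) k"
    unfolding hka_fps prod_shift_PP W ..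
  also have "\<dots> = cf (At i * Bt j * inverse Dt) k"
  proof (cases "k < 0")
    case True then show ?thesis unfolding cf_def by simp
  next
    case False
    show ?thesis
    proof (cases "k = 0")
      case True then show ?thesis unfolding cf_def At_def Bt_def Qt_def using Dt0 by simp
    next
      case False
      then have k1: "1 \<le> k" using \<open>\<not> k < 0\<close> by simp
      have lo: "2 - int N \<le> lam \<mu> i" using lam_lower[OF y i] .
      have "PP a {2 - int j .. k - int j} * Qt = At i * Bt j"
      proof (cases "1 \<le> lam \<mu> i")
        case True
        have "PP a {2 - int j .. k - int j} = Bt j * PP a {1..lam \<mu> i - 1}"
          unfolding Bt_def k_def using PP_split[of "2 - int j" 1 "lam \<mu> i - 1" a] True j by simp
        moreover have "At i = Qt * PP a {1..lam \<mu> i - 1}"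
          unfolding At_def Qt_def using PP_split[of "1 - int N" 1 "lam \<mu> i - 1" a] True by simp
        ultimately show ?thesis by (simp add: algebra_simps)
      next
        case False
        have "Qt = At i * PP a {lam \<mu> i..0}"
          unfolding At_def Qt_def using PP_split[of "1 - int N" "lam \<mu> i" 0 a] False lo by simp
        moreover have "Bt j = PP a {2 - int j .. k - int j} * PP a {lam \<mu> i..0}"
          unfolding Bt_def k_def using PP_split[of "2 - int j" "lam \<mu> i" 0 a] False k1 k_def by simp
        ultimately show ?thesis by (simp add: algebra_simps)
      qed
      then have "PP a {2 - int j .. k - int j} * (Qt * inverse Dt) = At i * Bt j * inverse Dt"
        by (metis mult.assoc)
      then show ?thesis by (rule arg_cong[where f="\<lambda>F. cf F k"])
    qed
  qed
  finally show ?thesis unfolding k_def .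
qed


definition "Mm i l = cf (At i * Gt l * inverse Dt) (lam \<mu> i - 1 + int l)"

lemma Bt_basis:
  "\<exists>cc. \<forall>j\<in>{1..N}. Bt j = (\<Sum>l\<in>{1..j}. fps_const (cc j l) * fps_X ^ (j - l) * Gt l) \<and> cc j j = 1"
proof -
  have "\<forall>j. \<exists>c. j \<in> {1..N} \<longrightarrow> (Bt j = (\<Sum>l\<in>{1..j}. fps_const (c l) * fps_X ^ (j - l) * Gt l) \<and> c j = 1)"
  proof
    fix j
    show "\<exists>c. j \<in> {1..N} \<longrightarrow> (Bt j = (\<Sum>l\<in>{1..j}. fps_const (c l) * fps_X ^ (j - l) * Gt l) \<and> c j = 1)"
    proof (cases "j \<in> {1..N}")
      case True
      have "card {2 - int j..0} = j - 1" using True by simp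
      then have db: "dbound (Bt j) (j - 1)" unfolding Bt_def PP_def
        using dbound_prod_fac[of "{2 - int j..0}" a] by simp
      obtain c where "Bt j = (\<Sum>l\<in>{1..j}. fps_const (c l) * fps_X ^ (j - l) * (\<Prod>r\<in>{1..<l}. fac (a (lam \<mu> r))))"
        "c j = Bt j $ 0"
        using newton_basis[of j "Bt j" "\<lambda>r. a (lam \<mu> r)"] db True by auto
      moreover have "Bt j $ 0 = 1" unfolding Bt_def by simp
      ultimately show ?thesis unfolding Gt_def by auto
    qed blast
  qed
  then obtain cc where "\<forall>j. j \<in> {1..N} \<longrightarrow> (Bt j = (\<Sum>l\<in>{1..j}. fps_const (cc j l) * fps_X ^ (j - l) * Gt l) \<and> cc j j = 1)"
    by metis
  then show ?thesis by blast
qed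

lemma entry_sum:
  assumes "Bt j = (\<Sum>l\<in>{1..j}. fps_const (c l) * fps_X ^ (j - l) * Gt l)"
  shows "cf (At i * Bt j * inverse Dt) (lam \<mu> i - 1 + int j) = (\<Sum>l\<in>{1..j}. c l * Mm i l)"
proof -
  have "At i * Bt j * inverse Dt = (\<Sum>l\<in>{1..j}. fps_const (c l) * (fps_X ^ (j - l) * (At i * Gt l * inverse Dt)))"
    unfolding assms sum_distrib_left sum_distrib_right by (rule sum.cong) (simp_all add: algebra_simps)
  then have "cf (At i * Bt j * inverse Dt) (lam \<mu> i - 1 + int j) =
      (\<Sum>l\<in>{1..j}. c l * cf (At i * Gt l * inverse Dt) (lam \<mu> i - 1 + int j - int (j - l)))"
    by (simp add: cf_sum cf_cmult cf_Xpow)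
  also have "\<dots> = (\<Sum>l\<in>{1..j}. c l * Mm i l)"
    unfolding Mm_def by (rule sum.cong) (auto simp: of_nat_diff algebra_simps)
  finally show ?thesis .
qed

lemma cancel2: "P1 $ 0 = 1 \<Longrightarrow> P2 $ 0 = 1 \<Longrightarrow> (X * P1 * P2) * inverse (P1 * P2) = (X :: complex fps)"
proof -
  assume "P1 $ 0 = 1" "P2 $ 0 = 1"
  then have h: "P1 * inverse P1 = 1" "P2 * inverse P2 = 1" by (simp_all add: inv_cancel)
  have "(X * P1 * P2) * inverse (P1 * P2) = X * (P1 * inverse P1) * (P2 * inverse P2)"
    unfolding fps_inverse_mult by (simp add: algebra_simps)
  then show ?thesis unfolding h by simp
qed

lemma At_split:
  assumes i: "1 \<le> i" "i \<le> N"
  shows "At i = (\<Prod>r\<in>{i+1..N}. fac (a (lam \<mu> r))) * PP a (kap \<mu> ` {1..part \<mu> i})"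
proof -
  have "At i = PP a (lam \<mu> ` {i+1..N}) * PP a (kap \<mu> ` {1..part \<mu> i})"
    unfolding At_def row_split(1)[OF y i] PP_def
    by (rule prod.union_disjoint) (use row_split(2)[OF y i] in auto)
  moreover have "inj_on (lam \<mu>) {i+1..N}" by (rule inj_on_subset[OF inj_lam[OF y]]) auto
  ultimately show ?thesis by (simp add: PP_image)
qed

lemma card_kap: "card (kap \<mu> ` {1..m}) = m"
proof -
  have "inj_on (kap \<mu>) {1..m}" by (rule inj_on_subset[OF inj_kap[OF y]]) auto
  then show ?thesis by (simp add: card_image)
qed

lemma Mm_upper:
  assumes i: "1 \<le> i" "i < l" "l \<le> N"
  shows "Mm i l = 0"
proof -
  let ?f = "\<lambda>r. fac (a (lam \<mu> r))"
  define K where "K = PP a (kap \<mu> ` {1..part \<mu> i})"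
  define P1 where "P1 = (\<Prod>r\<in>{1..i}. ?f r)"
  define P2 where "P2 = (\<Prod>r\<in>{i+1..N}. ?f r)"
  define Pm where "Pm = (\<Prod>r\<in>{i+1..<l}. ?f r)"
  have D: "Dt = P1 * P2"
  proof -
    have "{1..N} = {1..i} \<union> {i+1..N}" using i by auto
    then show ?thesis unfolding Dt_def P1_def P2_def by (simp add: prod.union_disjoint)
  qed
  have G: "Gt l = P1 * Pm"
  proof -
    have e: "{1..<l} = {1..i} \<union> {i+1..<l}" using i by auto
    have "(\<Prod>r\<in>{1..i} \<union> {i+1..<l}. ?f r) = P1 * Pm" unfolding P1_def Pm_def
      by (rule prod.union_disjoint) auto
    then show ?thesis unfolding Gt_def e .
  qed
  have Ai: "At i = P2 * K" using At_split[of i] i unfolding P2_def K_def by simp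
  have "At i * Gt l * inverse Dt = ((K * Pm) * P1 * P2) * inverse (P1 * P2)"
    unfolding Ai G D by (simp only: mult_ac)
  also have "\<dots> = K * Pm" by (rule cancel2) (simp_all add: P1_def P2_def)
  finally have e: "At i * Gt l * inverse Dt = K * Pm" .
  have d1: "dbound K (part \<mu> i)"
    using dbound_prod_fac[of "kap \<mu> ` {1..part \<mu> i}" a] unfolding K_def PP_def card_kap by simp
  have d2: "dbound Pm (l - 1 - i)"
    using dbound_prod_fac[of "{i+1..<l}" "\<lambda>r. a (lam \<mu> r)"] unfolding Pm_def by simp
  have "dbound (K * Pm) (part \<mu> i + (l - 1 - i))" by (rule dbound_mult[OF d1 d2])
  then show ?thesis unfolding Mm_def e
    by (rule cf_dbound) (use i in \<open>simp add: lam_def\<close>)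
qed

lemma Mm_diag:
  assumes i: "1 \<le> i" "i \<le> N"
  shows "Mm i i = (\<Prod>j\<in>{1..part \<mu> i}. a (lam \<mu> i) - a (kap \<mu> j))"
proof -
  let ?f = "\<lambda>r. fac (a (lam \<mu> r))"
  define K where "K = PP a (kap \<mu> ` {1..part \<mu> i})"
  define P1 where "P1 = (\<Prod>r\<in>{1..<i}. ?f r)"
  define P2 where "P2 = (\<Prod>r\<in>{i+1..N}. ?f r)"
  have D: "Dt = (P1 * P2) * ?f i"
  proof -
    have e: "{1..N} = insert i ({1..<i} \<union> {i+1..N})" using i by auto
    have "(\<Prod>r\<in>{1..<i} \<union> {i+1..N}. ?f r) = P1 * P2" unfolding P1_def P2_def
      by (rule prod.union_disjoint) auto
    moreover have "(\<Prod>r\<in>insert i ({1..<i} \<union> {i+1..N}). ?f r) = ?f i * (\<Prod>r\<in>{1..<i} \<union> {i+1..N}. ?f r)"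
      by (rule prod.insert) auto
    ultimately show ?thesis unfolding Dt_def e by (simp only: mult_ac)
  qed
  have Ai: "At i = P2 * K" using At_split[OF i] unfolding P2_def K_def by simp
  have "At i * Gt i * inverse Dt = ((K * inverse (?f i)) * P1 * P2) * inverse (P1 * P2)"
    unfolding Ai D Gt_def P1_def[symmetric] fps_inverse_mult
    by (simp only: mult_ac)
  also have "\<dots> = K * inverse (?f i)" by (rule cancel2) (simp_all add: P1_def P2_def)
  finally have e: "At i * Gt i * inverse Dt = K * inverse (?f i)" .
  have "Mm i i = (K * inverse (?f i)) $ part \<mu> i"
    unfolding Mm_def e using i by (simp add: cf_def lam_def)
  also have "\<dots> = (\<Prod>m\<in>kap \<mu> ` {1..part \<mu> i}. a (lam \<mu> i) - a m)"
    using diag_value[of "kap \<mu> ` {1..part \<mu> i}" a "a (lam \<mu> i)"] unfolding K_def PP_def card_kap by simp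
  also have "\<dots> = (\<Prod>j\<in>{1..part \<mu> i}. a (lam \<mu> i) - a (kap \<mu> j))"
  proof -
    have inj: "inj_on (kap \<mu>) {1..part \<mu> i}" by (rule inj_on_subset[OF inj_kap[OF y]]) auto
    show ?thesis by (simp only: prod.reindex[OF inj] comp_def)
  qed
  finally show ?thesis .
qed


lemma main:
  "sval \<mu> a (pv_at a \<mu>) = (\<Prod>i\<in>{1..N}. \<Prod>j\<in>{1..part \<mu> i}. a (lam \<mu> i) - a (kap \<mu> j))"
proof -
  obtain cc where cc: "\<And>j. j \<in> {1..N} \<Longrightarrow> Bt j = (\<Sum>l\<in>{1..j}. fps_const (cc j l) * fps_X ^ (j - l) * Gt l)"
    "\<And>j. j \<in> {1..N} \<Longrightarrow> cc j j = 1"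
    using Bt_basis by blast
  define E where "E = mat N N (\<lambda>(i, j). hka (shift (1 - int (j + 1)) a) (pv_at a \<mu>)
            (int (part \<mu> (i + 1)) - int (i + 1) + int (j + 1)))"
  define Mx where "Mx = mat N N (\<lambda>(i, l). Mm (i + 1) (l + 1))"
  define Cx where "Cx = mat N N (\<lambda>(l, j). if l \<le> j then cc (j + 1) (l + 1) else 0)"
  have sv: "sval \<mu> a (pv_at a \<mu>) = det E" unfolding sval_def E_def Let_def ..
  have EMC: "E = Mx * Cx"
  proof (rule eq_matI)
    fix i j assume "i < dim_row (Mx * Cx)" "j < dim_col (Mx * Cx)"
    then have ij: "i < N" "j < N" unfolding Mx_def Cx_def by auto
    have "E $$ (i, j) = hka (shift (1 - int (j + 1)) a) (pv_at a \<mu>) (lam \<mu> (i + 1) - 1 + int (j + 1))"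
      unfolding E_def lam_def using ij by simp
    also have "\<dots> = cf (At (i + 1) * Bt (j + 1) * inverse Dt) (lam \<mu> (i + 1) - 1 + int (j + 1))"
      by (rule entry) (use ij in auto)
    also have "\<dots> = (\<Sum>l\<in>{1..j + 1}. cc (j + 1) l * Mm (i + 1) l)"
      by (rule entry_sum) (rule cc(1), use ij in auto)
    also have "\<dots> = (\<Sum>l\<in>{0..j}. cc (j + 1) (l + 1) * Mm (i + 1) (l + 1))"
      using sum.shift_bounds_cl_Suc_ivl[of "\<lambda>l. cc (j + 1) l * Mm (i + 1) l" 0 j] by simp
    also have "\<dots> = (\<Sum>l\<in>{0..<N}. Mm (i + 1) (l + 1) * (if l \<le> j then cc (j + 1) (l + 1) else 0))"
    proof -
      have e: "{0..j} = {l \<in> {0..<N}. l \<le> j}" using ij by auto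
      have "(\<Sum>l\<in>{0..j}. cc (j + 1) (l + 1) * Mm (i + 1) (l + 1)) =
        (\<Sum>l\<in>{0..<N}. if l \<le> j then cc (j + 1) (l + 1) * Mm (i + 1) (l + 1) else 0)"
        unfolding e by (rule sum.inter_filter) simp
      also have "\<dots> = (\<Sum>l\<in>{0..<N}. Mm (i + 1) (l + 1) * (if l \<le> j then cc (j + 1) (l + 1) else 0))"
        by (rule sum.cong) auto
      finally show ?thesis .
    qed
    also have "\<dots> = (Mx * Cx) $$ (i, j)"
      unfolding Mx_def Cx_def using ij by (simp add: scalar_prod_def)
    finally show "E $$ (i, j) = (Mx * Cx) $$ (i, j)" .
  qed (simp_all add: E_def Mx_def Cx_def)
  have dM: "det Mx = (\<Prod>i\<in>{0..<N}. Mm (i + 1) (i + 1))"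
  proof -
    have "det Mx = prod_list (diag_mat Mx)"
      by (rule det_lower_triangular[of N]) (auto simp: Mx_def intro!: Mm_upper)
    then show ?thesis unfolding prod_list_diag_prod Mx_def by simp
  qed
  have dC: "det Cx = 1"
  proof -
    have "det Cx = prod_list (diag_mat Cx)"
      by (rule det_upper_triangular[of _ N]) (auto simp: Cx_def upper_triangular_def)
    then show ?thesis unfolding prod_list_diag_prod Cx_def using cc(2) by simp
  qed
  have "det E = det Mx * det Cx" unfolding EMC
    by (rule det_mult[of _ N]) (simp_all add: Mx_def Cx_def)
  also have "\<dots> = (\<Prod>i\<in>{0..<N}. Mm (i + 1) (i + 1))" using dM dC by simp
  also have "\<dots> = (\<Prod>i\<in>{1..N}. Mm i i)"
    using prod.shift_bounds_cl_Suc_ivl[of "\<lambda>i. Mm i i" 0 "N - 1"] ne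
    by (simp add: atLeastLessThanSuc_atLeastAtMost[symmetric])
  also have "\<dots> = (\<Prod>i\<in>{1..N}. \<Prod>j\<in>{1..part \<mu> i}. a (lam \<mu> i) - a (kap \<mu> j))"
    by (rule prod.cong) (simp_all add: Mm_diag)
  finally show ?thesis unfolding sv .
qed

end


lemma boxes_Sigma: "boxes \<mu> = Sigma {1..length \<mu>} (\<lambda>i. {1..part \<mu> i})"
  unfolding boxes_def by auto

theorem theorem11:
  fixes a :: "int \<Rightarrow> complex" and \<mu> :: "nat list"
  assumes "young \<mu>"
  shows "sval \<mu> a (pv_at a \<mu>) =
           (\<Prod>(i, j)\<in>boxes \<mu>. a (int (part \<mu> i) - int i + 1) - a (int j - int (conjp \<mu> j)))
       \<and> (\<Prod>(i, j)\<in>boxes \<mu>. a (int (part \<mu> i) - int i + 1) - a (int j - int (conjp \<mu> j))) =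
           (\<Prod>(i, j)\<in>boxes \<mu>. a (int (part \<mu> i) - int i + 1) + dual a (int (conjp \<mu> j) - int j + 1))
       \<and> (inj a \<longrightarrow> sval \<mu> a (pv_at a \<mu>) \<noteq> 0)"
proof -
  have fb: "finite (boxes \<mu>)" unfolding boxes_Sigma by simp
  have P1: "sval \<mu> a (pv_at a \<mu>) =
           (\<Prod>(i, j)\<in>boxes \<mu>. a (int (part \<mu> i) - int i + 1) - a (int j - int (conjp \<mu> j)))"
  proof (cases "\<mu> = []")
    case True
    have "boxes \<mu> = {}" unfolding boxes_def True by auto
    moreover have "sval \<mu> a (pv_at a \<mu>) = 1" unfolding sval_def True Let_def by simp
    ultimately show ?thesis by simp
  next
    case False
    interpret ctx a \<mu> using assms False by unfold_locales
    show ?thesis unfolding main boxes_Sigma prod.Sigma[symmetric, OF finite_atLeastAtMost] lam_def kap_def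
      by (simp add: prod.Sigma)
  qed
  have P2: "(\<Prod>(i, j)\<in>boxes \<mu>. a (int (part \<mu> i) - int i + 1) - a (int j - int (conjp \<mu> j))) =
           (\<Prod>(i, j)\<in>boxes \<mu>. a (int (part \<mu> i) - int i + 1) + dual a (int (conjp \<mu> j) - int j + 1))"
    unfolding dual_def by (rule prod.cong) (auto simp: algebra_simps)
  have P3: "inj a \<longrightarrow> sval \<mu> a (pv_at a \<mu>) \<noteq> 0"
  proof
    assume inj: "inj a"
    have "\<forall>(i, j)\<in>boxes \<mu>. a (int (part \<mu> i) - int i + 1) - a (int j - int (conjp \<mu> j)) \<noteq> 0"
    proof (clarify)
      fix i j assume b: "(i, j) \<in> boxes \<mu>" and z: "a (int (part \<mu> i) - int i + 1) - a (int j - int (conjp \<mu> j)) = 0"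
      then have "int (part \<mu> i) - int i + 1 = int j - int (conjp \<mu> j)" using inj unfolding inj_def by simp
      moreover have "1 \<le> i" "1 \<le> j" using b unfolding boxes_def by auto
      ultimately show False using lam_kap_ne[OF assms, of i j] unfolding lam_def kap_def by simp
    qed
    then show "sval \<mu> a (pv_at a \<mu>) \<noteq> 0" unfolding P1 using fb by (simp add: prod_zero_iff split_beta)
  qed
  show ?thesis using P1 P2 P3 by blast
qed

end
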